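(* Let $N\in\mathbb{N}$, $a\ge0$, $b>0$, $\alpha:=a+b-1$, $\beta:=b-1$, and let $z_1\le\dots\le z_N$ be the ordered zeros of the Jacobi polynomial $P_N^{(\alpha,\beta)}$. Let $\tilde S=(\tilde s_{i,j})_{i,j=1,\dots,N}$ be the matrix with $$\tilde s_{j,j}=4\sum_{l\ne j}\frac{1-z_j^2}{(z_j-z_l)^2}+2(a+b)\frac{1+z_j}{1-z_j}+2b\frac{1-z_j}{1+z_j},\qquad \tilde s_{i,j}=\frac{-4\sqrt{(1-z_j^2)(1-z_i^2)}}{(z_i-z_j)^2}\ (i\ne j),$$ and let $\lambda_k:=2k(2N+\alpha+\beta+1-k)$. Then for each $k=2,\dots,N$ there exists a polynomial $p_k$ of degree at most $k-2$ such that the vector $v_k:=\bigl(z_1^{k-1}\sqrt{1-z_1^2},\dots,z_N^{k-1}\sqrt{1-z_N^2}\bigr)^T$ satisfies $$\tilde S v_k=\Bigl((\lambda_k z_1^{k-1}+p_k(z_1))\sqrt{1-z_1^2},\dots,(\lambda_k z_N^{k-1}+p_k(z_N))\sqrt{1-z_N^2}\Bigr)^T.$$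
   Context: $P_N^{(\alpha,\beta)}$ denotes the classical Jacobi polynomial of degree $N$, orthogonal on $]-1,1[$ with respect to the weight $(1-x)^\alpha(1+x)^\beta$; its zeros are simple and lie in $]-1,1[$. *)

theory Defs
  imports Complex_Main "HOL-Computational_Algebra.Polynomial"
begin

definition jacobiP :: "nat \<Rightarrow> real \<Rightarrow> real \<Rightarrow> real \<Rightarrow> real" where
  "jacobiP n al be x =
     (\<Sum>s=0..n. ((real n + al) gchoose (n - s)) * ((real n + be) gchoose s)
                 * ((x - 1) / 2) ^ s * ((x + 1) / 2) ^ (n - s))"

definition S_tilde :: "nat \<Rightarrow> real \<Rightarrow> real \<Rightarrow> (nat \<Rightarrow> real) \<Rightarrow> nat \<Rightarrow> nat \<Rightarrow> real" where
  "S_tilde N a b z i j =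
     (if i = j then
        4 * (\<Sum>l\<in>{1..N} - {j}. (1 - (z j)\<^sup>2) / (z j - z l)\<^sup>2)
        + 2 * (a + b) * (1 + z j) / (1 - z j) + 2 * b * (1 - z j) / (1 + z j)
      else - 4 * sqrt ((1 - (z j)\<^sup>2) * (1 - (z i)\<^sup>2)) / (z i - z j)\<^sup>2)"

end

theory Submission
  imports Defs
begin



fun Hp :: "nat \<Rightarrow> real \<Rightarrow> real poly" where
  "Hp 0 y = 0"
| "Hp (Suc n) y = smult y (Hp n y) - smult (real n) (monom 1 (n - 1))"

lemma Hp_id: "x ^ n - y ^ n = real n * x ^ (n - 1) * (x - y) + (x - y)^2 * poly (Hp n y) x"
proof (induction n)
  case 0 then show ?case by simp
next
  case (Suc n)
  have e: "real n * x ^ n = real n * x * x ^ (n - 1)" by (cases n) auto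
  have "x ^ Suc n - y ^ Suc n = x * (x^n - y^n) + (x - y) * y ^ n" by (simp add: algebra_simps)
  also have "\<dots> = x * (real n * x ^ (n - 1) * (x - y) + (x - y)^2 * poly (Hp n y) x) + (x - y) * y ^ n"
    using Suc by simp
  finally have h: "x ^ Suc n - y ^ Suc n = x * (real n * x ^ (n - 1) * (x - y) + (x - y)^2 * poly (Hp n y) x) + (x - y) * y ^ n" .
  have yn: "y ^ n = x ^ n - real n * x ^ (n - 1) * (x - y) - (x - y)^2 * poly (Hp n y) x"
    using Suc by simp
  show ?case unfolding h apply (subst yn)
    by (cases n) (simp_all add: poly_monom algebra_simps power2_eq_square)
qed

lemma Hp_diag: "poly (Hp n x) x = - (real n * (real n - 1) / 2) * x ^ (n - 2)"
proof (induction n)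
  case 0 then show ?case by simp
next
  case (Suc n)
  show ?case
  proof (cases n)
    case 0 then show ?thesis by simp
  next
    case (Suc n')
    then show ?thesis
    proof (cases n')
      case 0 with Suc show ?thesis by simp
    next
      case (Suc n'')
      have nn: "n = Suc (Suc n'')" using \<open>n = Suc n'\<close> Suc by simp
      have "poly (Hp (Suc n) x) x = x * poly (Hp n x) x - real n * x^(n-1)"
        by (simp add: poly_monom)
      also have "\<dots> = x * (- (real n * (real n - 1) / 2) * x ^ (n - 2)) - real n * x^(n-1)"
        using Suc.IH by simp
      also have "\<dots> = - (real (Suc n) * (real (Suc n) - 1) / 2) * x ^ (Suc n - 2)"
        unfolding nn by (simp add: algebra_simps)
      finally show ?thesis .
    qed
  qed
qed

lemma Hp_deg: "degree (Hp n y) \<le> n - 2"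
proof (induction n)
  case 0 then show ?case by simp
next
  case (Suc n)
  have "degree (Hp (Suc n) y) \<le> max (degree (smult y (Hp n y))) (degree (smult (real n) (monom (1::real) (n - 1))))"
    by (simp add: degree_diff_le)
  also have "\<dots> \<le> n - 1"
    using Suc.IH degree_smult_le[of y "Hp n y"] degree_smult_le[of "real n" "monom (1::real) (n - 1)"]
      degree_monom_le[of "1::real" "n - 1"] by linarith
  finally show ?case by simp
qed

lemma Hp_coeff: "coeff (Hp (Suc (Suc n)) y) n = - (real n + 1)"
proof -
  have "coeff (Hp (Suc n) y) n = 0"
  proof (cases n)
    case 0 then show ?thesis by simp
  next
    case (Suc k) then show ?thesis
    using Hp_deg[of "Suc n" y] by (intro coeff_eq_0) simp
  qed
  then show ?thesis by (simp add: coeff_monom)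
qed

lemma Hp_coeff0: "n \<ge> 1 \<Longrightarrow> coeff (Hp n y) n = 0"
  using Hp_deg[of n y] by (intro coeff_eq_0) simp




definition Ac :: "nat \<Rightarrow> real \<Rightarrow> real \<Rightarrow> nat \<Rightarrow> real" where
  "Ac n al be s = ((real n + al) gchoose (n - s)) * ((real n + be) gchoose s)"

definition UU :: "real poly" where "UU = [:-1/2, 1/2:]"
definition VV :: "real poly" where "VV = [:1/2, 1/2:]"

definition Jp :: "nat \<Rightarrow> real \<Rightarrow> real \<Rightarrow> real poly" where
  "Jp n al be = (\<Sum>s=0..n. smult (Ac n al be s) (UU ^ s * VV ^ (n - s)))"

lemma poly_UU: "poly UU x = (x - 1) / 2" by (simp add: UU_def field_simps)
lemma poly_VV: "poly VV x = (x + 1) / 2" by (simp add: VV_def field_simps)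

lemma poly_Jp: "poly (Jp n al be) x = jacobiP n al be x"
  by (simp add: Jp_def jacobiP_def poly_sum poly_UU poly_VV Ac_def mult.assoc)

lemma pderiv_sum': "pderiv (sum f A) = (\<Sum>x\<in>A. pderiv (f x))"
  by (induction A rule: infinite_finite_induct) (auto simp: pderiv_add)

lemma pderiv_UV: "pderiv (UU ^ a * VV ^ b) =
   smult (real a / 2) (UU ^ (a - 1) * VV ^ b) + smult (real b / 2) (UU ^ a * VV ^ (b - 1))"
proof -
  have u: "pderiv UU = [:1/2:]" by (simp add: UU_def pderiv_pCons)
  have v: "pderiv VV = [:1/2:]" by (simp add: VV_def pderiv_pCons)
  show ?thesis
    by (simp add: pderiv_mult pderiv_power u v algebra_simps)
qed

lemma poly_UV_deriv: "poly (pderiv (UU ^ a * VV ^ b)) x =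
   real a / 2 * ((x - 1) / 2) ^ (a - 1) * ((x + 1) / 2) ^ b
 + real b / 2 * ((x - 1) / 2) ^ a * ((x + 1) / 2) ^ (b - 1)"
  by (simp add: pderiv_UV poly_UU poly_VV)

lemma poly_UV_deriv2: "poly (pderiv (pderiv (UU ^ a * VV ^ b))) x =
   real a / 2 * (real (a - 1) / 2 * ((x - 1) / 2) ^ (a - 1 - 1) * ((x + 1) / 2) ^ b
                + real b / 2 * ((x - 1) / 2) ^ (a - 1) * ((x + 1) / 2) ^ (b - 1))
 + real b / 2 * (real a / 2 * ((x - 1) / 2) ^ (a - 1) * ((x + 1) / 2) ^ (b - 1)
                + real (b - 1) / 2 * ((x - 1) / 2) ^ a * ((x + 1) / 2) ^ (b - 1 - 1))"
  by (simp add: pderiv_UV pderiv_add pderiv_smult poly_UV_deriv poly_UU poly_VV mult.assoc)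




lemma ode_term:
  fixes u v x al be :: real and s d :: nat
  assumes "u = (x-1)/2" "v = (x+1)/2"
  shows "(1 - x^2) * (real s / 2 * (real (s - 1) / 2 * u ^ (s - 1 - 1) * v ^ d + real d / 2 * u ^ (s - 1) * v ^ (d - 1))
       + real d / 2 * (real s / 2 * u^(s-1) * v^(d-1) + real (d - 1)/2 * u^s * v^(d-1-1)))
   + (be - al - (al+be+2)*x) * (real s / 2 * u^(s-1) * v^d + real d / 2 * u^s * v^(d-1))
   + real (s+d) * (real (s+d) + al + be + 1) * (u^s * v^d)
   = - real s * (real s + al) * u^(s-1) * v^(d+1) - real d * (real d + be) * u^(s+1) * v^(d-1)
     + (real d * (real d + be) + real s * (real s + al)) * u^s * v^d"
proof -
  have x: "x = 2*u + 1" and v: "v = u + 1" using assms by auto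
  have hs: "s = 0 \<or> s = 1 \<or> (\<exists>a. s = a + 2)" by presburger
  have hd: "d = 0 \<or> d = 1 \<or> (\<exists>b. d = b + 2)" by presburger
  consider (s0) "s = 0" | (s1) "s = 1" | (s2) a where "s = a + 2" using hs by blast
  then show ?thesis
  proof cases
    case s0
    consider (d0) "d = 0" | (d1) "d = 1" | (d2) b where "d = b + 2" using hd by blast
    then show ?thesis
    proof cases
      case d0
      show ?thesis unfolding s0 d0
        by (simp add: power_add x v field_simps; (algebra)?)
    next
      case d1
      show ?thesis unfolding s0 d1
        by (simp add: power_add x v field_simps; (algebra)?)
    next
      case (d2 b)
      show ?thesis unfolding s0 d2
        by (simp add: power_add x v field_simps; (algebra)?)
    qed
  next
    case s1
    consider (d0) "d = 0" | (d1) "d = 1" | (d2) b where "d = b + 2" using hd by blast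
    then show ?thesis
    proof cases
      case d0
      show ?thesis unfolding s1 d0
        by (simp add: power_add x v field_simps; (algebra)?)
    next
      case d1
      show ?thesis unfolding s1 d1
        by (simp add: power_add x v field_simps; (algebra)?)
    next
      case (d2 b)
      show ?thesis unfolding s1 d2
        by (simp add: power_add x v field_simps; (algebra)?)
    qed
  next
    case (s2 a)
    consider (d0) "d = 0" | (d1) "d = 1" | (d2) b where "d = b + 2" using hd by blast
    then show ?thesis
    proof cases
      case d0
      show ?thesis unfolding s2 d0
        by (simp add: power_add x v field_simps; (algebra)?)
    next
      case d1
      show ?thesis unfolding s2 d1
        by (simp add: power_add x v field_simps; (algebra)?)
    next
      case (d2 b)
      show ?thesis unfolding s2 d2
        by (simp add: power_add x v field_simps; (algebra)?)
    qed
  qed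
qed




lemma gch_absorb: "(real k + 1) * ((r::real) gchoose (Suc k)) = (r - real k) * (r gchoose k)"
  using gbinomial_mult_1[of r k] by (simp add: algebra_simps)

lemma Ac_shift:
  assumes "s < n"
  shows "Ac n al be (Suc s) * (real (Suc s) * (real (Suc s) + al))
       = Ac n al be s * (real (n - s) * (real (n - s) + be))"
proof -
  obtain k where k: "n - s = Suc k" using assms by (metis Suc_diff_Suc)
  have nk: "n - Suc s = k" using k by simp
  have 1: "(real k + 1) * ((real n + al) gchoose (Suc k)) = (real n + al - real k) * ((real n + al) gchoose k)"
    by (rule gch_absorb)
  have 2: "(real s + 1) * ((real n + be) gchoose (Suc s)) = (real n + be - real s) * ((real n + be) gchoose s)"
    by (rule gch_absorb)
  have ks: "real k = real n - real s - 1" using k assms by linarith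
  have "Ac n al be (Suc s) * (real (Suc s) * (real (Suc s) + al))
     = (((real n + al) gchoose k) * (real n + al - real k)) * (((real n + be) gchoose (Suc s)) * (real s + 1))"
    unfolding Ac_def nk ks by (simp add: algebra_simps)
  also have "\<dots> = (((real n + al) gchoose (Suc k)) * (real k + 1)) * (((real n + be) gchoose s) * (real n + be - real s))"
  proof -
    have h1: "((real n + al) gchoose k) * (real n + al - real k) = (real k + 1) * ((real n + al) gchoose (Suc k))"
      using 1 by (simp add: mult.commute)
    have h2: "((real n + be) gchoose (Suc s)) * (real s + 1) = (real n + be - real s) * ((real n + be) gchoose s)"
      using 2 by (simp add: mult.commute)
    show ?thesis unfolding h1 h2 by (simp add: mult_ac)
  qed
  also have "\<dots> = Ac n al be s * (real (n - s) * (real (n - s) + be))"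
  proof -
    have nks: "real n = real s + real k + 1" using ks by simp
    show ?thesis unfolding Ac_def k by (simp add: nks algebra_simps)
  qed
  finally show ?thesis .
qed

lemma R1: "(\<Sum>s=0..n. Ac n al be s * (real s * (real s + al) * u^(s-1) * v^(n-s+1)))
         = (\<Sum>s=0..n. Ac n al be s * (real (n-s) * (real (n-s) + be) * u^s * v^(n-s)))"
proof (cases n)
  case 0 then show ?thesis by simp
next
  case (Suc m)
  have "(\<Sum>s=0..n. Ac n al be s * (real s * (real s + al) * u^(s-1) * v^(n-s+1)))
      = (\<Sum>s=0..m. Ac n al be (Suc s) * (real (Suc s) * (real (Suc s) + al) * u^s * v^(n - Suc s + 1)))"
    unfolding Suc by (subst sum.atLeast0_atMost_Suc_shift) simp
  also have "\<dots> = (\<Sum>s=0..m. Ac n al be s * (real (n-s) * (real (n-s) + be) * u^s * v^(n-s)))"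
  proof (rule sum.cong[OF refl])
    fix s assume "s \<in> {0..m}"
    then have sn: "s < n" using Suc by simp
    have e: "n - Suc s + 1 = n - s" using sn by simp
    show "Ac n al be (Suc s) * (real (Suc s) * (real (Suc s) + al) * u^s * v^(n - Suc s + 1))
        = Ac n al be s * (real (n-s) * (real (n-s) + be) * u^s * v^(n-s))"
      unfolding e using Ac_shift[OF sn, of al be] by (simp add: mult.assoc[symmetric])
  qed
  also have "\<dots> = (\<Sum>s=0..n. Ac n al be s * (real (n-s) * (real (n-s) + be) * u^s * v^(n-s)))"
    unfolding Suc by (subst sum.atLeast0_atMost_Suc) simp
  finally show ?thesis .
qed

lemma R2: "(\<Sum>s=0..n. Ac n al be s * (real (n-s) * (real (n-s) + be) * u^(s+1) * v^(n-s-1)))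
         = (\<Sum>s=0..n. Ac n al be s * (real s * (real s + al) * u^s * v^(n-s)))"
proof (cases n)
  case 0 then show ?thesis by simp
next
  case (Suc m)
  have "(\<Sum>s=0..n. Ac n al be s * (real (n-s) * (real (n-s) + be) * u^(s+1) * v^(n-s-1)))
      = (\<Sum>s=0..m. Ac n al be s * (real (n-s) * (real (n-s) + be) * u^(s+1) * v^(n-s-1)))"
    unfolding Suc by (subst sum.atLeast0_atMost_Suc) simp
  also have "\<dots> = (\<Sum>s=0..m. Ac n al be (Suc s) * (real (Suc s) * (real (Suc s) + al) * u^(Suc s) * v^(n - Suc s)))"
  proof (rule sum.cong[OF refl])
    fix s assume "s \<in> {0..m}"
    then have sn: "s < n" using Suc by simp
    show "Ac n al be s * (real (n-s) * (real (n-s) + be) * u^(s+1) * v^(n-s-1))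
        = Ac n al be (Suc s) * (real (Suc s) * (real (Suc s) + al) * u^(Suc s) * v^(n - Suc s))"
      using Ac_shift[OF sn, of al be] by (simp add: mult.assoc[symmetric])
  qed
  also have "\<dots> = (\<Sum>s=0..n. Ac n al be s * (real s * (real s + al) * u^s * v^(n-s)))"
    unfolding Suc by (subst sum.atLeast0_atMost_Suc_shift) simp
  finally show ?thesis .
qed

lemma jacobi_ode:
  "(1 - x^2) * poly (pderiv (pderiv (Jp n al be))) x + (be - al - (al+be+2)*x) * poly (pderiv (Jp n al be)) x
   + real n * (real n + al + be + 1) * poly (Jp n al be) x = 0"
proof -
  define u where "u = (x-1)/2"
  define v where "v = (x+1)/2"
  define A where "A = Ac n al be"
  define a0 where "a0 = (\<lambda>s. u^s * v^(n-s))"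
  define a1 where "a1 = (\<lambda>s. real s / 2 * u ^ (s - 1) * v ^ (n-s) + real (n-s) / 2 * u ^ s * v ^ (n-s - 1))"
  define a2 where "a2 = (\<lambda>s. real s / 2 * (real (s - 1) / 2 * u ^ (s - 1 - 1) * v ^ (n-s)
                + real (n-s) / 2 * u ^ (s - 1) * v ^ (n-s - 1))
 + real (n-s) / 2 * (real s / 2 * u ^ (s - 1) * v ^ (n-s - 1)
                + real (n-s - 1) / 2 * u ^ s * v ^ (n-s - 1 - 1)))"
  have P0: "poly (Jp n al be) x = (\<Sum>s=0..n. A s * a0 s)"
    by (simp add: Jp_def poly_sum poly_UU poly_VV u_def v_def A_def a0_def)
  have P1: "poly (pderiv (Jp n al be)) x = (\<Sum>s=0..n. A s * a1 s)"
    by (simp add: Jp_def pderiv_sum' pderiv_smult poly_sum poly_UV_deriv u_def v_def A_def a1_def)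
  have P2: "poly (pderiv (pderiv (Jp n al be))) x = (\<Sum>s=0..n. A s * a2 s)"
    by (simp add: Jp_def pderiv_sum' pderiv_smult poly_sum poly_UV_deriv2 u_def v_def A_def a2_def)
  define X where "X = (\<lambda>s. real s * (real s + al) * u^(s-1) * v^(n-s+1))"
  define Y where "Y = (\<lambda>s. real (n-s) * (real (n-s) + be) * u^(s+1) * v^(n-s-1))"
  define F where "F = (\<lambda>s. real (n-s) * (real (n-s) + be) * u^s * v^(n-s))"
  define G where "G = (\<lambda>s. real s * (real s + al) * u^s * v^(n-s))"
  have tm: "(1 - x^2) * a2 s + (be - al - (al+be+2)*x) * a1 s + real n * (real n + al + be + 1) * a0 s
        = - X s - Y s + (F s + G s)" if "s \<in> {0..n}" for s
  proof -
    have sd: "s + (n - s) = n" using that by simp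
    show ?thesis
      using ode_term[OF u_def v_def, of s "n - s" be al] unfolding sd a0_def a1_def a2_def X_def Y_def F_def G_def
      by (simp add: algebra_simps)
  qed
  have "(1 - x^2) * poly (pderiv (pderiv (Jp n al be))) x + (be - al - (al+be+2)*x) * poly (pderiv (Jp n al be)) x
   + real n * (real n + al + be + 1) * poly (Jp n al be) x
    = (\<Sum>s=0..n. A s * ((1 - x^2) * a2 s + (be - al - (al+be+2)*x) * a1 s + real n * (real n + al + be + 1) * a0 s))"
  proof -
    have e: "\<And>s. A s * ((1 - x^2) * a2 s + (be - al - (al+be+2)*x) * a1 s + real n * (real n + al + be + 1) * a0 s)
      = (1 - x^2) * (A s * a2 s) + (be - al - (al+be+2)*x) * (A s * a1 s) + real n * (real n + al + be + 1) * (A s * a0 s)"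
      by (simp add: algebra_simps)
    show ?thesis unfolding P0 P1 P2 by (simp only: e sum.distrib sum_distrib_left[symmetric])
  qed
  also have "\<dots> = (\<Sum>s=0..n. A s * (- X s - Y s + (F s + G s)))"
    using tm by (intro sum.cong) auto
  also have "\<dots> = - (\<Sum>s=0..n. A s * X s) - (\<Sum>s=0..n. A s * Y s) + (\<Sum>s=0..n. A s * F s) + (\<Sum>s=0..n. A s * G s)"
    by (simp add: sum_distrib_left sum.distrib sum_subtractf sum_negf algebra_simps)
  also have "(\<Sum>s=0..n. A s * X s) = (\<Sum>s=0..n. A s * F s)"
    unfolding A_def X_def F_def by (rule R1)
  also have "(\<Sum>s=0..n. A s * Y s) = (\<Sum>s=0..n. A s * G s)"
    unfolding A_def Y_def G_def by (rule R2)
  finally show ?thesis by simp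
qed




lemma gch_pos: assumes "r > real k - 1" shows "(r gchoose k) > 0"
proof -
  have "(\<Prod>i=0..<k. r - of_nat i) > 0"
    by (rule prod_pos) (use assms in auto)
  then show ?thesis by (simp add: gbinomial_prod_rev)
qed

lemma Ac_pos: assumes "al > -1" "be > -1" "s \<le> n" shows "Ac n al be s > 0"
  unfolding Ac_def using assms by (intro mult_pos_pos gch_pos) (auto simp: of_nat_diff)

lemma jacobi_pos_right:
  assumes "al > -1" "be > -1" "x \<ge> 1"
  shows "jacobiP n al be x > 0"
  unfolding jacobiP_def
proof (rule sum_pos2[of _ 0])
  show "0 < (real n + al gchoose n - 0) * (real n + be gchoose 0) * ((x - 1) / 2) ^ 0 * ((x + 1) / 2) ^ (n - 0)"
    using Ac_pos[OF assms(1,2), of 0 n] assms(3) by (simp add: Ac_def)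
  fix s assume "s \<in> {0..n}"
  then have "0 < (real n + al gchoose n - s) * (real n + be gchoose s)"
    using Ac_pos[OF assms(1,2), of s n] by (simp add: Ac_def)
  then show "0 \<le> (real n + al gchoose n - s) * (real n + be gchoose s) * ((x - 1) / 2) ^ s * ((x + 1) / 2) ^ (n - s)"
  proof -
    assume h: "0 < (real n + al gchoose n - s) * (real n + be gchoose s)"
    have "0 \<le> ((x - 1) / 2) ^ s" "0 \<le> ((x + 1) / 2) ^ (n - s)" using assms(3) by auto
    then show ?thesis using mult_nonneg_nonneg[OF mult_nonneg_nonneg[OF less_imp_le[OF h]]] by blast
  qed
qed auto

lemma jacobi_pos_left:
  assumes "al > -1" "be > -1" "x \<le> -1"
  shows "(-1)^n * jacobiP n al be x > 0"
proof -
  have e: "(-1)^n * (((x - 1) / 2) ^ s * ((x + 1) / 2) ^ (n - s)) = ((1 - x) / 2) ^ s * ((- 1 - x) / 2) ^ (n - s)"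
    if "s \<le> n" for s
  proof -
    have n: "(-1::real)^n = (-1)^s * (-1)^(n-s)" using that by (metis power_add le_add_diff_inverse)
    have a: "(1 - x) / 2 = (-1) * ((x - 1) / 2)" and b: "(- 1 - x) / 2 = (-1) * ((x + 1) / 2)" by (simp_all add: field_simps)
    have "((1 - x) / 2) ^ s * ((- 1 - x) / 2) ^ (n - s) = ((-1)^s * ((x - 1) / 2) ^ s) * ((-1)^(n-s) * ((x + 1) / 2) ^ (n - s))"
      unfolding a b by (simp only: power_mult_distrib)
    also have "\<dots> = (-1)^n * (((x - 1) / 2) ^ s * ((x + 1) / 2) ^ (n - s))"
      unfolding n by (simp only: mult_ac)
    finally show ?thesis by simp
  qed
  have "(-1)^n * jacobiP n al be x = (\<Sum>s=0..n. Ac n al be s * (((1 - x) / 2) ^ s * ((- 1 - x) / 2) ^ (n - s)))"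
    unfolding jacobiP_def sum_distrib_left
  proof (rule sum.cong[OF refl])
    fix s assume "s \<in> {0..n}"
    then have sn: "s \<le> n" by simp
    have "(-1)^n * ((real n + al gchoose n - s) * (real n + be gchoose s) * ((x - 1) / 2) ^ s * ((x + 1) / 2) ^ (n - s))
      = Ac n al be s * ((-1)^n * (((x - 1) / 2) ^ s * ((x + 1) / 2) ^ (n - s)))"
      by (simp only: Ac_def mult_ac)
    then show "(-1)^n * ((real n + al gchoose n - s) * (real n + be gchoose s) * ((x - 1) / 2) ^ s * ((x + 1) / 2) ^ (n - s))
      = Ac n al be s * (((1 - x) / 2) ^ s * ((- 1 - x) / 2) ^ (n - s))"
      using e[OF sn] by (simp only:)
  qed
  also have "\<dots> > 0"
  proof (rule sum_pos2[of _ n])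
    show "0 < Ac n al be n * (((1 - x) / 2) ^ n * ((- 1 - x) / 2) ^ (n - n))"
      using Ac_pos[OF assms(1,2), of n n] assms(3) by simp
    fix s assume "s \<in> {0..n}"
    then show "0 \<le> Ac n al be s * (((1 - x) / 2) ^ s * ((- 1 - x) / 2) ^ (n - s))"
      using Ac_pos[OF assms(1,2), of s n] assms(3) by (intro mult_nonneg_nonneg) auto
  qed auto
  finally show ?thesis .
qed

lemma jacobi_root_range:
  assumes "al > -1" "be > -1" "jacobiP n al be x = 0"
  shows "-1 < x \<and> x < 1"
proof (rule ccontr)
  assume "\<not> (-1 < x \<and> x < 1)"
  then have "x \<ge> 1 \<or> x \<le> -1" by auto
  then show False
  proof
    assume h: "x \<ge> 1" show False using jacobi_pos_right[OF assms(1,2) h, of n] assms(3) by simp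
  next
    assume h: "x \<le> -1" show False using jacobi_pos_left[OF assms(1,2) h, of n] assms(3) by simp
  qed
qed

lemma degree_Jp: "degree (Jp n al be) \<le> n"
  unfolding Jp_def
proof (rule degree_sum_le)
  fix s assume "s \<in> {0..n}"
  have u: "degree UU = 1" by (simp add: UU_def)
  have v: "degree VV = 1" by (simp add: VV_def)
  have "degree (smult (Ac n al be s) (UU ^ s * VV ^ (n - s))) \<le> degree (UU ^ s * VV ^ (n - s))"
    by (rule degree_smult_le)
  also have "\<dots> \<le> degree (UU ^ s) + degree (VV ^ (n - s))" by (rule degree_mult_le)
  also have "\<dots> \<le> s + (n - s)"
    using degree_power_le[of UU s] degree_power_le[of VV "n - s"] u v by simp
  finally show "degree (smult (Ac n al be s) (UU ^ s * VV ^ (n - s))) \<le> n" using \<open>s \<in> {0..n}\<close> by simp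
qed auto

definition PiZ :: "(nat \<Rightarrow> real) \<Rightarrow> nat set \<Rightarrow> real poly" where
  "PiZ z J = (\<Prod>j\<in>J. [:- z j, 1:])"

lemma PiZ_dvd:
  assumes "finite J" "inj_on z J" "\<forall>j\<in>J. poly p (z j) = 0"
  shows "PiZ z J dvd p"
  using assms
proof (induction J arbitrary: p rule: finite_induct)
  case empty then show ?case by (simp add: PiZ_def)
next
  case (insert a J)
  have "poly p (z a) = 0" using insert.prems by simp
  then obtain q where q: "p = [:- z a, 1:] * q" using poly_eq_0_iff_dvd by (metis dvdE)
  have "\<forall>j\<in>J. poly q (z j) = 0"
  proof
    fix j assume j: "j \<in> J"
    have "z j \<noteq> z a"
    proof
      assume "z j = z a"
      then have "j = a" using inj_onD[OF insert.prems(1)] j by auto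
      then show False using insert.hyps(2) j by simp
    qed
    moreover have "poly p (z j) = 0" using insert.prems j by simp
    ultimately show "poly q (z j) = 0" using q by simp
  qed
  then have "PiZ z J dvd q" using insert.IH insert.prems(1) by (auto intro: inj_on_subset)
  moreover have "PiZ z (insert a J) = [:- z a, 1:] * PiZ z J" by (simp add: PiZ_def insert.hyps)
  ultimately show ?case using q by (metis mult_dvd_mono dvd_refl)
qed

lemma PiZ_nz: "finite J \<Longrightarrow> PiZ z J \<noteq> 0"
  unfolding PiZ_def by (simp add: prod_zero_iff)

lemma degree_PiZ: "finite J \<Longrightarrow> degree (PiZ z J) = card J"
  unfolding PiZ_def by (subst degree_prod_eq_sum_degree) auto

lemma poly_PiZ_nz: "finite J \<Longrightarrow> x \<notin> z ` J \<Longrightarrow> poly (PiZ z J) x \<noteq> 0"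
  unfolding PiZ_def poly_prod by (auto simp: prod_zero_iff)

lemma logderiv_PiZ:
  assumes "finite J" "x \<notin> z ` J"
  shows "poly (pderiv (PiZ z J)) x = poly (PiZ z J) x * (\<Sum>j\<in>J. 1 / (x - z j))"
  using assms
proof (induction J rule: finite_induct)
  case empty then show ?case by (simp add: PiZ_def)
next
  case (insert a J)
  have PiZ_ins: "PiZ z (insert a J) = [:- z a, 1:] * PiZ z J" using insert.hyps by (simp add: PiZ_def)
  have xa: "x - z a \<noteq> 0" using insert.prems by auto
  have IH: "poly (pderiv (PiZ z J)) x = poly (PiZ z J) x * (\<Sum>j\<in>J. 1 / (x - z j))"
    using insert.IH insert.prems by auto
  have d: "pderiv ([:- z a, 1:] * PiZ z J) = [:- z a, 1:] * pderiv (PiZ z J) + PiZ z J"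
    unfolding pderiv_mult by (simp add: pderiv_pCons)
  have "poly (pderiv (PiZ z (insert a J))) x = (x - z a) * poly (pderiv (PiZ z J)) x + poly (PiZ z J) x"
    unfolding PiZ_ins d by (simp add: algebra_simps)
  also have "\<dots> = poly (PiZ z (insert a J)) x * (\<Sum>j\<in>insert a J. 1 / (x - z j))"
    unfolding PiZ_ins IH using insert.hyps xa by (simp add: field_simps)
  finally show ?case .
qed




lemma S1_identity:
  fixes N :: nat and al be :: real and z :: "nat \<Rightarrow> real"
  assumes al: "al > -1" and be: "be > -1"
    and inj: "inj_on z {1..N}"
    and zs: "{x. jacobiP N al be x = 0} = z ` {1..N}"
    and i: "i \<in> {1..N}"
  shows "(\<Sum>j\<in>{1..N}-{i}. 1/(z i - z j)) = ((al+be+2) * z i + al - be) / (2 * (1 - (z i)^2))"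
proof -
  define J where "J = {1..N}"
  define P where "P = Jp N al be"
  have fJ: "finite J" by (simp add: J_def)
  have roots: "\<forall>j\<in>J. poly P (z j) = 0"
  proof
    fix j assume "j \<in> J"
    then have "z j \<in> {x. jacobiP N al be x = 0}" using zs by (simp add: J_def)
    then show "poly P (z j) = 0" by (simp add: P_def poly_Jp)
  qed
  have zi0: "poly P (z i) = 0" using roots i by (simp add: J_def)
  have range: "-1 < z i \<and> z i < 1"
    using jacobi_root_range[OF al be] zi0 by (simp add: P_def poly_Jp)
  have Pnz: "P \<noteq> 0"
  proof
    assume "P = 0"
    then have "jacobiP N al be 1 = 0" using poly_Jp[of N al be 1] by (simp add: P_def)
    then show False using jacobi_pos_right[OF al be, of 1 N] by simp
  qed
  have "PiZ z J dvd P" using PiZ_dvd[OF fJ _ roots] inj by (simp add: J_def)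
  then obtain q where Pq: "P = PiZ z J * q" by (auto elim: dvdE)
  have qnz: "q \<noteq> 0" using Pnz Pq by auto
  have cardJ: "card J = N" by (simp add: J_def)
  have "degree P = N + degree q"
    using Pq degree_mult_eq[OF PiZ_nz[OF fJ] qnz] degree_PiZ[OF fJ, of z] cardJ by simp
  then have "degree q = 0" using degree_Jp[of N al be] by (simp add: P_def)
  then obtain c where qc: "q = [:c:]" by (rule degree_eq_zeroE)
  have cnz: "c \<noteq> 0" using qnz qc by simp
  define R where "R = PiZ z (J - {i})"
  have iJ: "i \<in> J" using i by (simp add: J_def)
  have PiR: "PiZ z J = [:- z i, 1:] * R"
    unfolding PiZ_def R_def using prod.remove[OF fJ iJ, of "\<lambda>j. [:- z j, 1:]"] by simp
  have Peq: "P = [:- z i, 1:] * smult c R" using Pq PiR qc by simp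
  have notin: "z i \<notin> z ` (J - {i})"
  proof
    assume "z i \<in> z ` (J - {i})"
    then obtain j where j: "j \<in> J - {i}" "z i = z j" by auto
    then have "i = j" using inj_onD[OF inj] iJ by (auto simp: J_def)
    then show False using j by simp
  qed
  have Rnz: "poly R (z i) \<noteq> 0" unfolding R_def by (rule poly_PiZ_nz) (use fJ notin in auto)
  define S where "S = (\<Sum>j\<in>J-{i}. 1/(z i - z j))"
  have RS: "poly (pderiv R) (z i) = poly R (z i) * S"
    unfolding R_def S_def by (rule logderiv_PiZ) (use fJ notin in auto)
  have d1: "pderiv P = [:- z i, 1:] * smult c (pderiv R) + smult c R"
    unfolding Peq pderiv_mult by (simp add: pderiv_pCons pderiv_smult)
  have d2: "pderiv (pderiv P) = [:- z i, 1:] * smult c (pderiv (pderiv R)) + (smult c (pderiv R) + smult c (pderiv R))"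
    unfolding d1 pderiv_add pderiv_mult by (simp add: pderiv_pCons pderiv_smult algebra_simps)
  have P1: "poly (pderiv P) (z i) = c * poly R (z i)" unfolding d1 by simp
  have P2: "poly (pderiv (pderiv P)) (z i) = 2 * c * (poly R (z i) * S)" by (simp add: d2 RS)
  have ode: "(1 - (z i)^2) * (2 * c * (poly R (z i) * S)) + (be - al - (al+be+2) * z i) * (c * poly R (z i)) = 0"
    using jacobi_ode[of "z i" N al be] zi0 P1 P2 by (simp add: P_def)
  then have "c * poly R (z i) * (2 * (1 - (z i)^2) * S - ((al+be+2) * z i + al - be)) = 0"
    by (simp add: algebra_simps)
  then have "2 * (1 - (z i)^2) * S = (al+be+2) * z i + al - be" using cnz Rnz by simp
  moreover have "1 - (z i)^2 \<noteq> 0" using range by (simp add: power2_eq_square) (smt (verit) mult_less_cancel_left2 mult_minus_right)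
  ultimately have "S = ((al+be+2) * z i + al - be) / (2 * (1 - (z i)^2))" by (simp add: field_simps)
  then show ?thesis by (simp add: S_def J_def)
qed




lemma fi_core:
  fixes a b x M t T N :: real
  assumes "1 - x \<noteq> 0" "1 + x \<noteq> 0"
  shows "4*((M*t - (M+2)*x^2*t) * ((a+2*b)*x + a) / (2*((1-x)*(1+x)))) - 4*(-(M*(M-1)/2)*T + ((M+2)*(M+1)/2)*x*t) + (2*(a+b)*(1+x)/(1-x) + 2*b*(1-x)/(1+x))*x*t
   = 2*(M+1)*(2*N + a + 2*b - 2 - M)*x*t + 2*M*a*t + 2*M*(M-1)*T - 4*N*(M+1)*x*t"
proof -
  define p where "p = 1/(1-x)"
  define q where "q = 1/(1+x)"
  have hp: "p * (1-x) = 1" using assms by (simp add: p_def)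
  have hq: "q * (1+x) = 1" using assms by (simp add: q_def)
  have r1: "(M*t - (M+2)*x^2*t) * ((a+2*b)*x + a) / (2*((1-x)*(1+x))) = (M*t - (M+2)*x^2*t) * ((a+2*b)*x + a) * p * q / 2"
    by (simp add: p_def q_def)
  have r2: "2*(a+b)*(1+x)/(1-x) = 2*(a+b)*(1+x)*p" by (simp add: p_def)
  have r3: "2*b*(1-x)/(1+x) = 2*b*(1-x)*q" by (simp add: q_def)
  show ?thesis unfolding r1 r2 r3 using hp hq by algebra
qed

lemma pair_identity:
  fixes x y :: real and m :: nat
  assumes "x \<noteq> y"
  shows "((1 - x^2) * x^m - (1 - y^2) * y^m) / (x - y)^2
     = (real m * x^(m-1) - (real m + 2) * x^(m+1)) / (x - y) + poly (Hp m y - Hp (Suc (Suc m)) y) x"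
proof -
  have h1: "x^m - y^m = real m * x^(m-1) * (x-y) + (x-y)^2 * poly (Hp m y) x" by (rule Hp_id)
  have h2: "x^(Suc (Suc m)) - y^(Suc (Suc m)) = real (Suc (Suc m)) * x^(Suc m) * (x-y) + (x-y)^2 * poly (Hp (Suc (Suc m)) y) x"
    using Hp_id[of x "Suc (Suc m)" y] by simp
  have "(1 - x^2) * x^m - (1 - y^2) * y^m = (x^m - y^m) - (x^(Suc (Suc m)) - y^(Suc (Suc m)))"
    by (simp add: algebra_simps power2_eq_square)
  also have "\<dots> = (x - y) * (real m * x^(m-1) - (real m + 2) * x^(m+1)) + (x-y)^2 * poly (Hp m y - Hp (Suc (Suc m)) y) x"
    unfolding h1 h2 by (simp add: algebra_simps)
  finally have e: "(1 - x^2) * x^m - (1 - y^2) * y^m = (x - y) * (real m * x^(m-1) - (real m + 2) * x^(m+1)) + (x-y)^2 * poly (Hp m y - Hp (Suc (Suc m)) y) x" .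
  have d: "x - y \<noteq> 0" using assms by simp
  have aux: "\<And>g h :: real. (((x - y) * g + (x - y)^2 * h) / (x - y)^2) = g / (x - y) + h"
  proof -
    fix g h :: real
    have "((x - y) * g + (x - y)^2 * h) / (x - y)^2 = (x - y) * g / (x - y)^2 + h"
      using d by (simp add: add_divide_distrib)
    also have "(x - y) * g / (x - y)^2 = g / (x - y)" using d by (simp add: power2_eq_square)
    finally show "((x - y) * g + (x - y)^2 * h) / (x - y)^2 = g / (x - y) + h" .
  qed
  show ?thesis unfolding e by (rule aux)
qed

theorem lemma3p4:
  fixes N :: nat and a b :: real and z :: "nat \<Rightarrow> real"
  assumes "a \<ge> 0" and "b > 0"
    and "strict_mono_on {1..N} z"
    and "{x. jacobiP N (a + b - 1) (b - 1) x = 0} = z ` {1..N}"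
  shows "\<forall>k\<in>{2..N}. \<exists>p :: real poly. degree p \<le> k - 2 \<and>
           (\<forall>i\<in>{1..N}.
              (\<Sum>j=1..N. S_tilde N a b z i j * ((z j) ^ (k - 1) * sqrt (1 - (z j)\<^sup>2)))
              = (2 * real k * (2 * real N + (a + b - 1) + (b - 1) + 1 - real k) * (z i) ^ (k - 1)
                 + poly p (z i)) * sqrt (1 - (z i)\<^sup>2))"
proof
  fix k assume k: "k \<in> {2..N}"
  define m where "m = k - 1"
  have m1: "m \<ge> 1" and km: "k = m + 1" using k by (auto simp: m_def)
  define J where "J = {1..N}"
  have fJ: "finite J" and cardJ: "card J = N" by (auto simp: J_def)
  define al where "al = a + b - 1"
  define be where "be = b - 1"
  have al: "al > -1" and be: "be > -1" using assms(1,2) by (auto simp: al_def be_def)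
  have inj: "inj_on z J" unfolding J_def by (rule strict_mono_on_imp_inj_on[OF assms(3)])
  have zs: "{x. jacobiP N al be x = 0} = z ` {1..N}" using assms(4) by (simp add: al_def be_def)
  have rng: "-1 < z j \<and> z j < 1" if "j \<in> J" for j
  proof -
    have "z j \<in> {x. jacobiP N al be x = 0}" using zs that by (simp add: J_def)
    then show ?thesis using jacobi_root_range[OF al be] by simp
  qed
  define Gv where "Gv = (\<lambda>j. Hp m (z j) - Hp (Suc (Suc m)) (z j))"
  define p where "p = smult (2 * real m * (al - be)) (monom 1 (m - 1))
      + smult (2 * real m * (real m - 1)) (monom 1 (m - 2))
      + smult (- 4 * real N * (real m + 1)) (monom 1 m)
      + smult 4 (\<Sum>j\<in>J. Gv j)"
  have dGv: "degree (Gv j) \<le> m" for j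
  proof -
    have "degree (Hp m (z j)) \<le> m" using Hp_deg[of m "z j"] by simp
    moreover have "degree (Hp (Suc (Suc m)) (z j)) \<le> m" using Hp_deg[of "Suc (Suc m)" "z j"] by simp
    ultimately show ?thesis unfolding Gv_def by (intro order.trans[OF degree_diff_le_max]) simp
  qed
  have dp: "degree p \<le> m"
    unfolding p_def
    apply (intro degree_add_le order.trans[OF degree_smult_le] degree_sum_le fJ dGv)
    using m1 by (auto intro: order.trans[OF degree_monom_le])
  have cp: "coeff p m = 0"
  proof -
    have c1: "coeff (Gv j) m = m + 1" for j
      unfolding Gv_def using Hp_coeff0[OF m1, of "z j"] Hp_coeff[of m "z j"] by simp
    have "coeff p m = - 4 * real N * (real m + 1) + 4 * (\<Sum>j\<in>J. coeff (Gv j) m)"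
    proof -
      have "m - 1 \<noteq> m" "m - 2 \<noteq> m" using m1 by auto
      then show ?thesis unfolding p_def by (simp add: coeff_sum coeff_monom)
    qed
    also have "\<dots> = 0" unfolding c1 using cardJ by simp
    finally show ?thesis .
  qed
  have degp: "degree p \<le> k - 2"
  proof (rule degree_le, intro allI impI)
    fix n assume "k - 2 < n"
    then have "n = m \<or> n > m" using km by auto
    then show "coeff p n = 0" using cp dp by (auto intro: coeff_eq_0)
  qed
  show "\<exists>p :: real poly. degree p \<le> k - 2 \<and>
           (\<forall>i\<in>{1..N}.
              (\<Sum>j=1..N. S_tilde N a b z i j * ((z j) ^ (k - 1) * sqrt (1 - (z j)\<^sup>2)))
              = (2 * real k * (2 * real N + (a + b - 1) + (b - 1) + 1 - real k) * (z i) ^ (k - 1)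
                 + poly p (z i)) * sqrt (1 - (z i)\<^sup>2))"
  proof (intro exI conjI ballI)
    show "degree p \<le> k - 2" by (rule degp)
    fix i assume i: "i \<in> {1..N}"
    have iJ: "i \<in> J" using i by (simp add: J_def)
    define x where "x = z i"
    define w where "w = (\<lambda>j. 1 - (z j)^2)"
    have wpos: "w j > 0" if "j \<in> J" for j
    proof -
      have "\<bar>z j\<bar> < 1" using rng[OF that] by auto
      then have "(z j)^2 < 1" by (simp add: abs_square_less_1)
      then show ?thesis by (simp add: w_def)
    qed
    have xr: "-1 < x" "x < 1" using rng[OF iJ] by (auto simp: x_def)
    have x1: "1 - x \<noteq> 0" "1 + x \<noteq> 0" using xr by auto
    define S1 where "S1 = (\<Sum>j\<in>J-{i}. 1/(x - z j))"
    have S1v: "S1 = ((al+be+2)*x + al - be)/(2*(1-x^2))"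
      unfolding S1_def x_def J_def
      by (rule S1_identity[OF al be _ zs i]) (use inj in \<open>simp add: J_def\<close>)
    have neq: "z j \<noteq> x" if "j \<in> J-{i}" for j
    proof
      assume "z j = x"
      then have "j = i" using inj_onD[OF inj] that iJ by (auto simp: x_def)
      then show False using that by simp
    qed
    define Rr where "Rr = 2*(a+b)*(1+x)/(1-x) + 2*b*(1-x)/(1+x)"
    define gp where "gp = real m * x^(m-1) - (real m + 2)*x^(m+1)"
    define sw where "sw = sqrt (w i)"
    define T1 where "T1 = (\<Sum>l\<in>J-{i}. w i/(x - z l)^2)"
    define T2 where "T2 = (\<Sum>j\<in>J-{i}. w j * z j^m/(x - z j)^2)"
    have diag: "S_tilde N a b z i i = 4 * T1 + Rr"
      unfolding S_tilde_def T1_def by (simp add: J_def x_def w_def Rr_def)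
    have off: "S_tilde N a b z i j * (z j ^ m * sqrt (w j)) = sw * (- 4 * (w j * z j^m / (x - z j)^2))"
      if "j \<in> J-{i}" for j
    proof -
      have ij: "i \<noteq> j" using that by auto
      have "sqrt (w j) * sqrt (w j) = w j" using wpos[of j] that by simp
      then have sq: "sqrt (w j * w i) * sqrt (w j) = w j * sw"
        by (simp add: real_sqrt_mult sw_def algebra_simps)
      have st: "S_tilde N a b z i j = - 4 * sqrt (w j * w i) / (x - z j)^2"
        unfolding S_tilde_def w_def x_def using ij by simp
      have "S_tilde N a b z i j * (z j ^ m * sqrt (w j)) = - 4 * (sqrt (w j * w i) * sqrt (w j)) * z j ^ m / (x - z j)^2"
        unfolding st by (simp add: algebra_simps)
      also have "\<dots> = sw * (- 4 * (w j * z j^m / (x - z j)^2))" unfolding sq by (simp add: algebra_simps)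
      finally show ?thesis .
    qed
    have "(\<Sum>j=1..N. S_tilde N a b z i j * ((z j) ^ (k - 1) * sqrt (1 - (z j)\<^sup>2)))
        = (\<Sum>j\<in>J. S_tilde N a b z i j * (z j ^ m * sqrt (w j)))"
      by (simp add: J_def m_def w_def)
    also have "\<dots> = S_tilde N a b z i i * (x^m * sw) + (\<Sum>j\<in>J-{i}. S_tilde N a b z i j * (z j ^ m * sqrt (w j)))"
      by (simp add: sum.remove[OF fJ iJ] x_def sw_def)
    also have "(\<Sum>j\<in>J-{i}. S_tilde N a b z i j * (z j ^ m * sqrt (w j))) = sw * (- 4 * T2)"
      unfolding T2_def sum_distrib_left by (rule sum.cong[OF refl]) (simp add: off)
    also have "S_tilde N a b z i i * (x^m * sw) + sw * (- 4 * T2) = sw * (4 * (x^m * T1 - T2) + Rr * x^m)"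
      unfolding diag by (simp add: algebra_simps)
    also have "x^m * T1 - T2 = (\<Sum>j\<in>J-{i}. (w i * x^m - w j * z j^m)/(x - z j)^2)"
      unfolding T1_def T2_def sum_distrib_left sum_subtractf[symmetric]
      by (rule sum.cong[OF refl]) (simp add: diff_divide_distrib)
    also have "\<dots> = (\<Sum>j\<in>J-{i}. gp / (x - z j) + poly (Gv j) x)"
    proof (rule sum.cong[OF refl])
      fix j assume "j \<in> J - {i}"
      then have "x \<noteq> z j" using neq by force
      then show "(w i * x^m - w j * z j^m)/(x - z j)^2 = gp / (x - z j) + poly (Gv j) x"
        using pair_identity[of x "z j" m] by (simp add: w_def x_def[symmetric] gp_def Gv_def)
    qed
    also have "\<dots> = gp * S1 + (\<Sum>j\<in>J. poly (Gv j) x) - poly (Gv i) x"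
      unfolding S1_def sum.distrib sum_distrib_left using sum.remove[OF fJ iJ, of "\<lambda>j. poly (Gv j) x"]
      by simp
    finally have LHS: "(\<Sum>j=1..N. S_tilde N a b z i j * ((z j) ^ (k - 1) * sqrt (1 - (z j)\<^sup>2)))
        = sw * (4 * (gp * S1 + (\<Sum>j\<in>J. poly (Gv j) x) - poly (Gv i) x) + Rr * x^m)" .
    have Gvi: "poly (Gv i) x = - (real m * (real m - 1) / 2) * x ^ (m - 2) + ((real m + 2) * (real m + 1) / 2) * x^m"
      unfolding Gv_def x_def using Hp_diag[of m "z i"] Hp_diag[of "Suc (Suc m)" "z i"]
      by (simp add: algebra_simps)
    have polyp: "poly p x = 2 * real m * (al - be) * x^(m-1) + 2 * real m * (real m - 1) * x^(m-2)
       - 4 * real N * (real m + 1) * x^m + 4 * (\<Sum>j\<in>J. poly (Gv j) x)"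
      unfolding p_def by (simp add: poly_sum poly_monom)
    obtain m' where m': "m = Suc m'" using m1 by (cases m) auto
    have ex: "x^(m+1) = x^2 * x^(m-1)" "x^m = x * x^(m-1)" unfolding m' by (simp_all add: power2_eq_square)
    have core: "4 * (gp * S1) - 4 * poly (Gv i) x + Rr * x^m
       = 2 * real k * (2 * real N + (a + b - 1) + (b - 1) + 1 - real k) * x^m
         + (2 * real m * (al - be) * x^(m-1) + 2 * real m * (real m - 1) * x^(m-2) - 4 * real N * (real m + 1) * x^m)"
    proof -
      have e1: "al - be = a" by (simp_all add: al_def be_def)
      have e2: "2*(1-x^2) = 2*((1-x)*(1+x))" by (simp add: power2_eq_square algebra_simps)
      have e4: "(al+be+2)*x + al - be = (a+2*b)*x + a" by (simp add: al_def be_def algebra_simps)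
      have S1': "S1 = ((a+2*b)*x + a)/(2*((1-x)*(1+x)))" by (simp only: S1v e4 e2)
      have e3: "real k = real m + 1" using km by simp
      have F: "4*((real m*x^(m-1) - (real m+2)*x^2*x^(m-1)) * ((a+2*b)*x + a) / (2*((1-x)*(1+x))))
         - 4*(-(real m*(real m-1)/2)*x^(m-2) + ((real m+2)*(real m+1)/2)*x*x^(m-1))
         + (2*(a+b)*(1+x)/(1-x) + 2*b*(1-x)/(1+x))*x*x^(m-1)
         = 2*(real m+1)*(2*real N + a + 2*b - 2 - real m)*x*x^(m-1) + 2*real m*a*x^(m-1)
           + 2*real m*(real m-1)*x^(m-2) - 4*real N*(real m+1)*x*x^(m-1)"
        by (rule fi_core[OF x1])
      have L: "4 * (gp * S1) - 4 * poly (Gv i) x + Rr * x^m =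
          4*((real m*x^(m-1) - (real m+2)*x^2*x^(m-1)) * ((a+2*b)*x + a) / (2*((1-x)*(1+x))))
         - 4*(-(real m*(real m-1)/2)*x^(m-2) + ((real m+2)*(real m+1)/2)*x*x^(m-1))
         + (2*(a+b)*(1+x)/(1-x) + 2*b*(1-x)/(1+x))*x*x^(m-1)"
        unfolding Gvi S1' gp_def Rr_def ex by (simp only: times_divide_eq_right mult.assoc)
      have R: "2 * real k * (2 * real N + (a + b - 1) + (b - 1) + 1 - real k) * x^m
         + (2 * real m * (al - be) * x^(m-1) + 2 * real m * (real m - 1) * x^(m-2) - 4 * real N * (real m + 1) * x^m)
         = 2*(real m+1)*(2*real N + a + 2*b - 2 - real m)*x*x^(m-1) + 2*real m*a*x^(m-1)
           + 2*real m*(real m-1)*x^(m-2) - 4*real N*(real m+1)*x*x^(m-1)"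
        unfolding e1 e3 ex by (simp add: algebra_simps)
      show ?thesis unfolding L R by (rule F)
    qed
    show "(\<Sum>j=1..N. S_tilde N a b z i j * ((z j) ^ (k - 1) * sqrt (1 - (z j)\<^sup>2)))
              = (2 * real k * (2 * real N + (a + b - 1) + (b - 1) + 1 - real k) * (z i) ^ (k - 1)
                 + poly p (z i)) * sqrt (1 - (z i)\<^sup>2)"
    proof -
      have "sw * (4 * (gp * S1 + (\<Sum>j\<in>J. poly (Gv j) x) - poly (Gv i) x) + Rr * x^m)
         = (2 * real k * (2 * real N + (a + b - 1) + (b - 1) + 1 - real k) * x^m + poly p x) * sw"
      proof -
        have "4 * (gp * S1 + (\<Sum>j\<in>J. poly (Gv j) x) - poly (Gv i) x) + Rr * x^m
          = (4 * (gp * S1) - 4 * poly (Gv i) x + Rr * x^m) + 4 * (\<Sum>j\<in>J. poly (Gv j) x)"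
          by (simp add: algebra_simps)
        also have "\<dots> = 2 * real k * (2 * real N + (a + b - 1) + (b - 1) + 1 - real k) * x^m + poly p x"
          unfolding core polyp by (simp add: algebra_simps)
        finally show ?thesis by (simp add: mult.commute)
      qed
      also have "\<dots> = (2 * real k * (2 * real N + (a + b - 1) + (b - 1) + 1 - real k) * (z i) ^ (k - 1)
                 + poly p (z i)) * sqrt (1 - (z i)\<^sup>2)"
        by (simp add: x_def m_def sw_def w_def)
      finally show ?thesis using LHS by simp
    qed
  qed
qed


end
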